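(* Let $\mathcal{G}$ be the cyclic digraph on $n>1$ nodes, with the weights and matrices described in the context. Let $r$ be the largest modulus among the eigenvalues of $M_0=\begin{bmatrix} I-L & 0\\ L & S\end{bmatrix}$ that remain after two copies of the eigenvalue $1$ are removed (eigenvalues counted with algebraic multiplicity). If $$\epsilon\in\Big(0,\ \frac{\sqrt2}{3+\sqrt5}\,(1-r)\Big),$$ then the deterministic algorithm with parameter $\epsilon$ achieves average consensus. Moreover, $$r=\sqrt{1-\tfrac1n+\tfrac1{2n^2}+\tfrac1n\big(1-\tfrac1{2n}\big)\cos\tfrac{2\pi}{n}}.$$
   Context: Setting: the cyclic digraph has $\mathcal{V}=\{1,\dots,n\}$ and $\mathcal{E}=\{(1,2),(2,3),\dots,(n-1,n),(n,1)\}$. An edge $(j,i)$ means that $j$ sends to $i$. Its degree is $d=1$. Weights: $a_{ij}=1/(2n)$ if $(j,i)\in\mathcal{E}$ and $0$ otherwise. Also $b_{ih}=1/n$ if $(i,h)\in\mathcal{E}$ and $0$ otherwise. Matrices: $L=D-A$, where $A=[a_{ij}]$ and $D=\mathrm{diag}(\sum_j a_{ij})$. $S=(I-\tilde D)+B$, where $B=[b_{ih}]^T$ and $\tilde D=\mathrm{diag}(\sum_h b_{ih})$. Also $M=\begin{bmatrix} I-L & \epsilon I\\ L & S-\epsilon I\end{bmatrix}$. Deterministic algorithm: $(x(k+1),s(k+1))^T=M(x(k),s(k))^T$ with $s(0)=0$. Average consensus: for every $x(0)\in\mathbb{R}^n$, $(x(k),s(k))\to(x_a\mathbf{1},0)$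 where $x_a=\mathbf{1}^Tx(0)/n$. *)

theory Defs
  imports "Jordan_Normal_Form.Matrix" "Jordan_Normal_Form.Char_Poly"
    "HOL-Computational_Algebra.Fundamental_Theorem_Algebra"
begin

text \<open>Nodes 1..n are represented by indices 0..n-1 (node i+1 is index i).
  The cyclic digraph has edges (j,i) with i = j+1 mod n (j sends to i).\<close>

definition cyc_edge :: "nat \<Rightarrow> nat \<Rightarrow> nat \<Rightarrow> bool" where
  "cyc_edge n j i \<longleftrightarrow> j < n \<and> i < n \<and> i = (j + 1) mod n"

definition a_w :: "nat \<Rightarrow> nat \<Rightarrow> nat \<Rightarrow> real" where
  "a_w n i j = (if cyc_edge n j i then 1 / (2 * real n) else 0)"

definition b_w :: "nat \<Rightarrow> nat \<Rightarrow> nat \<Rightarrow> real" where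
  "b_w n i h = (if cyc_edge n i h then 1 / real n else 0)"

definition A_mat :: "nat \<Rightarrow> real mat" where
  "A_mat n = mat n n (\<lambda>(i, j). a_w n i j)"

definition D_mat :: "nat \<Rightarrow> real mat" where
  "D_mat n = mat n n (\<lambda>(i, j). if i = j then (\<Sum>l<n. a_w n i l) else 0)"

definition L_mat :: "nat \<Rightarrow> real mat" where
  "L_mat n = D_mat n - A_mat n"

definition B_mat :: "nat \<Rightarrow> real mat" where
  "B_mat n = transpose_mat (mat n n (\<lambda>(i, h). b_w n i h))"

definition Dt_mat :: "nat \<Rightarrow> real mat" where
  "Dt_mat n = mat n n (\<lambda>(i, j). if i = j then (\<Sum>h<n. b_w n i h) else 0)"

definition S_mat :: "nat \<Rightarrow> real mat" where
  "S_mat n = (1\<^sub>m n - Dt_mat n) + B_mat n"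

definition M_mat :: "nat \<Rightarrow> real \<Rightarrow> real mat" where
  "M_mat n eps = four_block_mat (1\<^sub>m n - L_mat n) (eps \<cdot>\<^sub>m 1\<^sub>m n)
                                (L_mat n) (S_mat n - eps \<cdot>\<^sub>m 1\<^sub>m n)"

definition M0_mat :: "nat \<Rightarrow> real mat" where
  "M0_mat n = four_block_mat (1\<^sub>m n - L_mat n) (0\<^sub>m n n) (L_mat n) (S_mat n)"

definition eig_M0 :: "nat \<Rightarrow> complex multiset" where
  "eig_M0 n = proots (char_poly (map_mat complex_of_real (M0_mat n)))"

definition r_M0 :: "nat \<Rightarrow> real" where
  "r_M0 n = Max (cmod ` set_mset (eig_M0 n - {#1, 1#}))"

definition average_consensus :: "nat \<Rightarrow> real \<Rightarrow> bool" where
  "average_consensus n eps \<longleftrightarrow>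
    (\<forall>x0 \<in> carrier_vec n.
       let z0 = x0 @\<^sub>v 0\<^sub>v n;
           xa = (\<Sum>i<n. x0 $ i) / real n
       in \<forall>i < 2 * n. (\<lambda>k. ((M_mat n eps ^\<^sub>m k) *\<^sub>v z0) $ i)
              \<longlonglongrightarrow> (if i < n then xa else 0))"

end

theory Submission
  imports Defs
begin



definition sc :: "nat \<Rightarrow> nat \<Rightarrow> nat" where "sc n j = (j + 1) mod n"
definition pr :: "nat \<Rightarrow> nat \<Rightarrow> nat" where "pr n i = (if i = 0 then n - 1 else i - 1)"

definition tri :: "nat \<Rightarrow> 'a::zero \<Rightarrow> 'a \<Rightarrow> 'a mat" where
  "tri n p q = mat n n (\<lambda>(i,j). if i = j then p else if i = sc n j then q else 0)"

lemma sc_pr: assumes "n > 1" "i < n" "j < n" shows "(i = sc n j) \<longleftrightarrow> (j = pr n i)"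
proof -
  have "sc n j = (if j + 1 = n then 0 else j + 1)" using assms by (auto simp: sc_def)
  then show ?thesis using assms by (auto simp: pr_def)
qed

lemma pr_lt: "n > 1 \<Longrightarrow> i < n \<Longrightarrow> pr n i < n" by (auto simp: pr_def)
lemma pr_neq: "n > 1 \<Longrightarrow> i < n \<Longrightarrow> pr n i \<noteq> i" by (auto simp: pr_def)

lemma tri_carrier[simp]: "tri n p q \<in> carrier_mat n n" by (simp add: tri_def)
lemma dim_tri[simp]: "dim_row (tri n p q) = n" "dim_col (tri n p q) = n" by (simp_all add: tri_def)
lemma tri_index: "i < n \<Longrightarrow> j < n \<Longrightarrow> tri n p q $$ (i,j) = (if i = j then p else if i = sc n j then q else 0)"
  by (simp add: tri_def)

lemma sum_two_delta:
  fixes v :: "nat \<Rightarrow> 'a::comm_ring_1"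
  assumes "n > 1" "i < n"
  shows "(\<Sum>j<n. (if i = j then p else if i = sc n j then q else 0) * v j) = p * v i + q * v (pr n i)"
proof -
  have "(\<Sum>j<n. (if i = j then p else if i = sc n j then q else 0) * v j)
      = (\<Sum>j<n. (if j = i then p * v j else 0) + (if j = pr n i then q * v j else 0))"
    by (rule sum.cong, simp, use assms sc_pr pr_neq in force)
  also have "\<dots> = p * v i + q * v (pr n i)"
    using assms pr_lt by (simp add: sum.distrib)
  finally show ?thesis .
qed

lemma mv_tri:
  fixes v :: "'a::comm_ring_1 vec"
  assumes "n > 1" "v \<in> carrier_vec n" "i < n"
  shows "(tri n p q *\<^sub>v v) $ i = p * v $ i + q * v $ (pr n i)"
proof -
  have "(tri n p q *\<^sub>v v) $ i = (\<Sum>j<n. (if i = j then p else if i = sc n j then q else 0) * v $ j)"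
    using assms by (auto simp: mult_mat_vec_def scalar_prod_def tri_def lessThan_atLeast0 intro!: sum.cong)
  also have "\<dots> = p * v $ i + q * v $ (pr n i)" by (rule sum_two_delta[OF assms(1,3)])
  finally show ?thesis .
qed

lemma map_tri: "map_mat f (tri n p q) = tri n (f p) (f q)" if "f 0 = 0"
  using that by (auto simp: tri_def intro!: eq_matI)

lemma Suc_mod_lt: "j < n \<Longrightarrow> Suc j mod n = (if Suc j = n then 0 else Suc j)"
  by (simp add: mod_Suc)

lemma sum_delta_pr:
  fixes n :: nat
  assumes "n > 1" "i < n"
  shows "(\<Sum>l<n. if l < n \<and> i < n \<and> i = (l + 1) mod n then (x::real) else 0) = x"
proof -
  have "(\<Sum>l<n. if l < n \<and> i < n \<and> i = (l + 1) mod n then x else 0) = (\<Sum>l<n. if l = pr n i then x else 0)"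
    by (rule sum.cong, simp, use assms sc_pr[of n i] in \<open>auto simp: sc_def\<close>)
  then show ?thesis using assms pr_lt by simp
qed

context fixes n :: nat assumes n1: "n > 1" begin

lemma A_tri: "A_mat n = tri n 0 (1/(2*real n))"
  using n1 by (auto simp: A_mat_def tri_def a_w_def cyc_edge_def sc_def Suc_mod_lt intro!: eq_matI)

lemma D_tri: "D_mat n = tri n (1/(2*real n)) 0"
  using n1 sum_delta_pr[OF n1] by (auto simp: D_mat_def tri_def a_w_def cyc_edge_def intro!: eq_matI)

lemma L_tri: "L_mat n = tri n (1/(2*real n)) (-1/(2*real n))"
  using n1 by (auto simp: L_mat_def A_tri D_tri tri_def sc_def Suc_mod_lt intro!: eq_matI)

lemma IL_tri: "1\<^sub>m n - L_mat n = tri n (1 - 1/(2*real n)) (1/(2*real n))"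
  using n1 by (auto simp: L_tri tri_def sc_def Suc_mod_lt intro!: eq_matI)

lemma B_tri: "B_mat n = tri n 0 (1/real n)"
  using n1 by (auto simp: B_mat_def tri_def b_w_def cyc_edge_def sc_def Suc_mod_lt intro!: eq_matI)

lemma Dt_tri: "Dt_mat n = tri n (1/real n) 0"
proof -
  have "(\<Sum>h<n. b_w n i h) = 1 / real n" if "i < n" for i
  proof -
    have "(\<Sum>h<n. b_w n i h) = (\<Sum>h<n. if h = (i+1) mod n then 1/real n else 0)"
      using that by (auto simp: b_w_def cyc_edge_def intro!: sum.cong)
    then show ?thesis using n1 by simp
  qed
  then show ?thesis by (auto simp: Dt_mat_def tri_def intro!: eq_matI)
qed

lemma S_tri: "S_mat n = tri n (1 - 1/real n) (1/real n)"
  using n1 by (auto simp: S_mat_def B_tri Dt_tri tri_def sc_def Suc_mod_lt intro!: eq_matI)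

lemma epsI_tri: "(e::real) \<cdot>\<^sub>m 1\<^sub>m n = tri n e 0"
  by (auto simp: tri_def intro!: eq_matI)

lemma Se_tri: "S_mat n - e \<cdot>\<^sub>m 1\<^sub>m n = tri n (1 - 1/real n - e) (1/real n)"
  using n1 by (auto simp: S_tri tri_def sc_def Suc_mod_lt intro!: eq_matI)

end



definition zeta :: "nat \<Rightarrow> complex" where "zeta n = cis (- 2 * pi / real n)"
definition omg :: "nat \<Rightarrow> complex" where "omg n = cis (2 * pi / real n)"

lemma cos_lt1: "0 < x \<Longrightarrow> x < 2 * pi \<Longrightarrow> cos x < 1"
proof -
  assume a: "0 < x" "x < 2 * pi"
  have "cos x = 1 - 2 * sin (x/2) ^ 2" using cos_double_sin[of "x/2"] by simp
  moreover have "sin (x/2) > 0" using a by (intro sin_gt_zero) auto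
  ultimately show ?thesis by simp
qed

context fixes n :: nat assumes n1: "n > 1" begin

lemma zeta_pow: "zeta n ^ m = cis (- 2 * pi * real m / real n)"
  unfolding zeta_def DeMoivre by (rule arg_cong[where f=cis]) (simp add: field_simps)
lemma omg_pow: "omg n ^ m = cis (2 * pi * real m / real n)"
  unfolding omg_def DeMoivre by (rule arg_cong[where f=cis]) (simp add: field_simps)

lemma zeta_n: "zeta n ^ n = 1" using n1 by (simp add: zeta_pow complex_eq_iff)
lemma omg_n: "omg n ^ n = 1" using n1 by (simp add: omg_pow complex_eq_iff)
lemma omg_zeta: "omg n * zeta n = 1" by (simp add: omg_def zeta_def cis_mult)
lemma cmod_zeta_pow[simp]: "cmod (zeta n ^ m) = 1" by (simp add: norm_power zeta_def)
lemma cmod_omg_pow[simp]: "cmod (omg n ^ m) = 1" by (simp add: norm_power omg_def)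

lemma zeta_pow_ne1: "0 < m \<Longrightarrow> m < n \<Longrightarrow> zeta n ^ m \<noteq> 1"
proof
  assume m: "0 < m" "m < n" and e: "zeta n ^ m = 1"
  have "cos (- 2 * pi * real m / real n) = 1" using arg_cong[OF e, of Re] by (simp add: zeta_pow)
  moreover have "cos (2 * pi * real m / real n) < 1"
    using m by (intro cos_lt1) (auto simp: field_simps)
  ultimately show False by (simp add: minus_divide_left[symmetric])
qed

lemma omg_pow_ne1: "0 < m \<Longrightarrow> m < n \<Longrightarrow> omg n ^ m \<noteq> 1"
proof
  assume m: "0 < m" "m < n" and e: "omg n ^ m = 1"
  have "cos (2 * pi * real m / real n) = 1" using arg_cong[OF e, of Re] by (simp add: omg_pow)
  moreover have "cos (2 * pi * real m / real n) < 1"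
    using m by (intro cos_lt1) (auto simp: field_simps)
  ultimately show False by simp
qed

lemma zeta_inj: assumes "j < n" "k < n" "zeta n ^ j = zeta n ^ k" shows "j = k"
proof (rule ccontr)
  assume ne: "j \<noteq> k"
  { fix a b assume ab: "a < b" "b < n" "zeta n ^ a = zeta n ^ b"
    have "zeta n ^ b = zeta n ^ (a + (b - a))" using ab by simp
    also have "\<dots> = zeta n ^ a * zeta n ^ (b - a)" by (rule power_add)
    finally have "zeta n ^ b = zeta n ^ a * zeta n ^ (b - a)" .
    then have "zeta n ^ (b - a) = 1" using ab(3) by (simp add: zeta_def)
    moreover have "b - a < n" "0 < b - a" using ab by linarith+
    ultimately have False using zeta_pow_ne1[of "b - a"] by blast }
  then show False using ne assms by (metis linorder_neqE_nat)
qed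

lemma omg_pr: "i < n \<Longrightarrow> omg n ^ (pr n i) = omg n ^ i * zeta n"
proof -
  assume i: "i < n"
  have "omg n ^ (pr n i) * omg n = omg n ^ i"
  proof (cases "i = 0")
    case True
    then show ?thesis using n1 omg_n by (simp add: pr_def power_Suc2[symmetric])
  next
    case False
    then show ?thesis by (simp add: pr_def power_Suc2[symmetric])
  qed
  then have "omg n ^ (pr n i) * omg n * zeta n = omg n ^ i * zeta n" by simp
  then show ?thesis using omg_zeta by (simp add: mult.assoc)
qed

definition ev_vec :: "nat \<Rightarrow> complex vec" where "ev_vec k = vec n (\<lambda>i. omg n ^ (i * k))"

lemma tri_ev: "tri n p q *\<^sub>v ev_vec k = (p + q * zeta n ^ k) \<cdot>\<^sub>v ev_vec k"
proof (rule eq_vecI)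
  fix i assume "i < dim_vec ((p + q * zeta n ^ k) \<cdot>\<^sub>v ev_vec k)"
  then have i: "i < n" by (simp add: ev_vec_def)
  have "(tri n p q *\<^sub>v ev_vec k) $ i = p * omg n ^ (i * k) + q * omg n ^ (pr n i * k)"
    using mv_tri[OF n1 _ i, of "ev_vec k"] i pr_lt[OF n1 i] by (simp add: ev_vec_def)
  also have "omg n ^ (pr n i * k) = omg n ^ (i * k) * zeta n ^ k"
    by (simp add: power_mult omg_pr[OF i] power_mult_distrib)
  finally show "(tri n p q *\<^sub>v ev_vec k) $ i = ((p + q * zeta n ^ k) \<cdot>\<^sub>v ev_vec k) $ i"
    using i by (simp add: ev_vec_def algebra_simps)
qed (simp add: ev_vec_def tri_def)

lemma tri_eigenvalue: "eigenvalue (tri n p q) (p + q * zeta n ^ k)"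
  unfolding eigenvalue_def eigenvector_def
proof (intro exI conjI)
  show "ev_vec k \<in> carrier_vec (dim_row (tri n p q))" by (simp add: ev_vec_def tri_def)
  show "ev_vec k \<noteq> 0\<^sub>v (dim_row (tri n p q))"
  proof
    assume "ev_vec k = 0\<^sub>v (dim_row (tri n p q))"
    then have "ev_vec k $ 0 = 0" using n1 by (simp add: tri_def)
    then show False using n1 by (simp add: ev_vec_def)
  qed
qed (rule tri_ev)

lemma proots_distinct:
  fixes A :: "complex mat" and ev :: "complex list"
  assumes A: "A \<in> carrier_mat n n" and d: "distinct ev" and l: "length ev = n"
    and e: "\<And>x. x \<in> set ev \<Longrightarrow> eigenvalue A x"
  shows "proots (char_poly A) = mset ev"
proof -
  have deg: "degree (char_poly A) = n" and c: "coeff (char_poly A) n = 1"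
    using degree_monic_char_poly[OF A] by auto
  have nz: "char_poly A \<noteq> 0" using c by auto
  have sub: "mset ev \<subseteq># proots (char_poly A)"
  proof (rule mset_subset_eqI)
    fix a
    show "count (mset ev) a \<le> count (proots (char_poly A)) a"
    proof (cases "a \<in> set ev")
      case True
      then have "poly (char_poly A) a = 0" using e eigenvalue_root_char_poly[OF A] by auto
      then have "count (proots (char_poly A)) a \<ge> 1" using nz
        by (simp add: Suc_le_eq order_root)
      moreover have "count (mset ev) a = 1" using d True by (simp add: distinct_count_atmost_1)
      ultimately show ?thesis by simp
    next
      case False
      then have "count (mset ev) a = 0" by (simp add: count_eq_zero_iff)
      then show ?thesis by (metis le0)
    qed
  qed
  have "size (proots (char_poly A)) = n" using deg by (simp add: size_proots_complex)
  then have "size (mset ev) = size (proots (char_poly A))" using l by simp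
  then show ?thesis using sub mset_subset_size by (metis subset_mset.le_less nat_less_le)
qed

lemma proots_tri:
  assumes q: "q \<noteq> 0"
  shows "proots (char_poly (tri n p q)) = mset (map (\<lambda>k. p + q * zeta n ^ k) [0..<n])"
proof (rule proots_distinct)
  show "distinct (map (\<lambda>k. p + q * zeta n ^ k) [0..<n])"
    unfolding distinct_map using q zeta_inj by (auto simp: inj_on_def)
qed (auto intro: tri_eigenvalue)

end



lemma char_poly_4block_ur0:
  fixes A :: "'a::idom mat"
  assumes A: "A \<in> carrier_mat n n" and C: "C \<in> carrier_mat m n" and D: "D \<in> carrier_mat m m"
  shows "char_poly (four_block_mat A (0\<^sub>m n m) C D) = char_poly A * char_poly D"
proof -
  let ?cm = "\<lambda> A. [:0, 1:] \<cdot>\<^sub>m 1\<^sub>m (dim_row A) + map_mat (\<lambda>a. [:- a:]) A"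
  let ?C = "map_mat (\<lambda>a. [:- a:]) C"
  have "char_poly (four_block_mat A (0\<^sub>m n m) C D) = det (?cm (four_block_mat A (0\<^sub>m n m) C D))"
    unfolding char_poly_defs using A D by simp
  also have "?cm (four_block_mat A (0\<^sub>m n m) C D) = four_block_mat (?cm A) (0\<^sub>m n m) ?C (?cm D)"
    by (rule eq_matI, insert A C D, auto simp: one_poly_def)
  also have "det \<dots> = det (?cm A) * det (?cm D)"
    by (rule det_four_block_mat_upper_right_zero[OF _ refl], insert A C D, auto)
  also have "\<dots> = char_poly A * char_poly D" unfolding char_poly_defs ..
  finally show ?thesis .
qed

definition alp :: "nat \<Rightarrow> nat \<Rightarrow> complex" where
  "alp n k = of_real (1 - 1/(2*real n)) + of_real (1/(2*real n)) * zeta n ^ k"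
definition bet :: "nat \<Rightarrow> nat \<Rightarrow> complex" where
  "bet n k = of_real (1 - 1/real n) + of_real (1/real n) * zeta n ^ k"

lemma aux_id: "(1 - b)^2 + b^2 + 2*(1-b)*b*x = 1 - 2*b*(1-(b::real))*(1-x)"
  by (simp add: power2_eq_square algebra_simps)

lemma alp0[simp]: "alp n 0 = 1" by (simp add: alp_def)
lemma bet0[simp]: "bet n 0 = 1" by (simp add: bet_def)

lemma cmod_sq: "cmod (of_real a + of_real b * zeta n ^ k) ^ 2 = a^2 + b^2 + 2*a*b*cos (2*pi*real k/real n)"
proof -
  have "zeta n ^ k = cis (- (2*pi*real k/real n))"
    unfolding zeta_def DeMoivre by (rule arg_cong[where f=cis]) (simp add: field_simps)
  also have "\<dots> = Complex (cos (2*pi*real k/real n)) (- sin (2*pi*real k/real n))"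
    by (simp add: cis.code)
  finally have z: "zeta n ^ k = Complex (cos (2*pi*real k/real n)) (- sin (2*pi*real k/real n))" .
  show ?thesis unfolding z cmod_power2
    by (simp add: power2_eq_square algebra_simps)
      (metis (no_types, lifting) distrib_left mult.commute mult.right_neutral sin_cos_squared_add3)
qed

lemma cos_le_first: assumes "1 \<le> k" "k < n" shows "cos (2*pi*real k/real n) \<le> cos (2*pi/real n)"
proof -
  have main: "cos (2*pi*real j/real n) \<le> cos (2*pi/real n)" if "1 \<le> j" "2*j \<le> n" for j
  proof -
    have n0: "real n > 0" using that by simp
    have "2*pi*real j/real n \<le> pi" using that n0 by (simp add: field_simps)
    moreover have "2*pi/real n \<le> 2*pi*real j/real n" using that n0 by (simp add: field_simps)
    moreover have "0 \<le> 2*pi/real n" using n0 by simp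
    ultimately show ?thesis by (subst cos_mono_le_eq) auto
  qed
  show ?thesis
  proof (cases "2*k \<le> n")
    case True then show ?thesis using main assms by simp
  next
    case False
    have "cos (2*pi*real k/real n) = cos (2*pi - 2*pi*real k/real n)" by simp
    also have "2*pi - 2*pi*real k/real n = 2*pi*real (n-k)/real n"
      using assms by (simp add: of_nat_diff field_simps)
    also have "cos \<dots> \<le> cos (2*pi/real n)" using False assms by (intro main) auto
    finally show ?thesis .
  qed
qed

context fixes n :: nat assumes n1: "n > 1" begin

lemma eig_M0_eq: "eig_M0 n = mset (map (alp n) [0..<n]) + mset (map (bet n) [0..<n])"
proof -
  have M0: "M0_mat n = four_block_mat (tri n (1 - 1/(2*real n)) (1/(2*real n))) (0\<^sub>m n n)
      (tri n (1/(2*real n)) (-1/(2*real n))) (tri n (1 - 1/real n) (1/real n))"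
    by (simp only: M0_mat_def IL_tri[OF n1]) (simp only: L_tri[OF n1] S_tri[OF n1])
  have "map_mat complex_of_real (M0_mat n) = four_block_mat
      (tri n (of_real (1 - 1/(2*real n))) (of_real (1/(2*real n)))) (0\<^sub>m n n)
      (tri n (of_real (1/(2*real n))) (of_real (-1/(2*real n)))) (tri n (of_real (1 - 1/real n)) (of_real (1/real n)))"
  proof -
    have z: "map_mat complex_of_real (0\<^sub>m n n) = 0\<^sub>m n n" by (auto intro!: eq_matI)
    show ?thesis unfolding M0
      by (subst map_four_block_mat[OF tri_carrier zero_carrier_mat tri_carrier tri_carrier])
        (simp only: map_tri of_real_0 z)
  qed
  then have "eig_M0 n = proots (char_poly (tri n (of_real (1 - 1/(2*real n))) (of_real (1/(2*real n))))
      * char_poly (tri n (of_real (1 - 1/real n)) (of_real (1/real n) :: complex)))"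
    unfolding eig_M0_def by (simp add: char_poly_4block_ur0)
  also have "\<dots> = proots (char_poly (tri n (of_real (1 - 1/(2*real n))) (of_real (1/(2*real n)))))
      + proots (char_poly (tri n (of_real (1 - 1/real n)) (of_real (1/real n) :: complex)))"
  proof (rule proots_mult)
    show "char_poly (tri n (of_real (1 - 1/(2*real n))) (of_real (1/(2*real n)) :: complex)) \<noteq> 0"
      using degree_monic_char_poly[OF tri_carrier] by (metis one_neq_zero coeff_0)
    show "char_poly (tri n (of_real (1 - 1/real n)) (of_real (1/real n) :: complex)) \<noteq> 0"
      using degree_monic_char_poly[OF tri_carrier] by (metis one_neq_zero coeff_0)
  qed
  also have "\<dots> = mset (map (alp n) [0..<n]) + mset (map (bet n) [0..<n])"
  proof -
    have q1: "complex_of_real (1/(2*real n)) \<noteq> 0" and q2: "complex_of_real (1/real n) \<noteq> 0"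
      using n1 by auto
    show ?thesis unfolding proots_tri[OF n1 q1] proots_tri[OF n1 q2]
      unfolding alp_def[abs_def] bet_def[abs_def] ..
  qed
  finally show ?thesis .
qed

lemma eig_rest: "eig_M0 n - {#1, 1#} = mset (map (alp n) [1..<n]) + mset (map (bet n) [1..<n])"
proof -
  have u: "[0..<n] = 0 # [1..<n]" using n1 by (simp add: upt_rec)
  show ?thesis unfolding eig_M0_eq u by simp
qed

lemma set_rest: "set_mset (eig_M0 n - {#1, 1#}) = alp n ` {1..<n} \<union> bet n ` {1..<n}"
  unfolding eig_rest by auto

lemma cmod_alp_sq: "cmod (alp n k) ^ 2 = 1 - 2 * (1/(2*real n)) * (1 - 1/(2*real n)) * (1 - cos (2*pi*real k/real n))"
  unfolding alp_def cmod_sq by (rule aux_id)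
lemma cmod_bet_sq: "cmod (bet n k) ^ 2 = 1 - 2 * (1/real n) * (1 - 1/real n) * (1 - cos (2*pi*real k/real n))"
  unfolding bet_def cmod_sq by (rule aux_id)

lemma alp_le: assumes "1 \<le> k" "k < n" shows "cmod (alp n k) \<le> cmod (alp n 1)"
proof -
  have "cmod (alp n k) ^ 2 \<le> cmod (alp n 1) ^ 2"
    unfolding cmod_alp_sq using cos_le_first[OF assms] n1
    by (intro diff_left_mono mult_left_mono) (auto simp: field_simps)
  then show ?thesis by (rule power2_le_imp_le) simp
qed

lemma bet_le_alp: "cmod (bet n k) \<le> cmod (alp n k)"
proof -
  let ?g = "1 - cos (2*pi*real k/real n)"
  have g: "?g \<ge> 0" by simp
  have d: "2 * (1/(2*real n)) * (1 - 1/(2*real n)) \<le> 2 * (1/real n) * (1 - 1/real n)"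
    using n1 by (simp add: field_simps)
  have "cmod (bet n k) ^ 2 \<le> cmod (alp n k) ^ 2"
    unfolding cmod_alp_sq cmod_bet_sq using mult_right_mono[OF d g] by linarith
  then show ?thesis by (rule power2_le_imp_le) simp
qed

lemma r_eq: "r_M0 n = cmod (alp n 1)"
  unfolding r_M0_def set_rest
proof (rule Max_eqI)
  show "cmod (alp n 1) \<in> cmod ` (alp n ` {1..<n} \<union> bet n ` {1..<n})" using n1 by auto
next
  fix y assume "y \<in> cmod ` (alp n ` {1..<n} \<union> bet n ` {1..<n})"
  then show "y \<le> cmod (alp n 1)" using alp_le bet_le_alp order_trans by fastforce
qed simp

lemma r_formula: "r_M0 n = sqrt (1 - 1 / real n + 1 / (2 * (real n)\<^sup>2)
                        + (1 / real n) * (1 - 1 / (2 * real n)) * cos (2 * pi / real n))"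
proof -
  have "r_M0 n = sqrt (cmod (alp n 1) ^ 2)" by (simp add: r_eq)
  also have "cmod (alp n 1) ^ 2 = 1 - 1 / real n + 1 / (2 * (real n)\<^sup>2)
                        + (1 / real n) * (1 - 1 / (2 * real n)) * cos (2 * pi / real n)"
    unfolding cmod_alp_sq using n1 by (simp add: field_simps power2_eq_square)
  finally show ?thesis .
qed

lemma alp_le_r: "1 \<le> k \<Longrightarrow> k < n \<Longrightarrow> cmod (alp n k) \<le> r_M0 n"
  using alp_le r_eq by simp
lemma bet_le_r: "1 \<le> k \<Longrightarrow> k < n \<Longrightarrow> cmod (bet n k) \<le> r_M0 n"
  using alp_le_r bet_le_alp order_trans by blast

end



definition stepx :: "nat \<Rightarrow> real \<Rightarrow> (nat \<Rightarrow> real) \<Rightarrow> (nat \<Rightarrow> real) \<Rightarrow> nat \<Rightarrow> real" where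
  "stepx n e x s = (\<lambda>i. (1 - 1/(2*real n)) * x i + (1/(2*real n)) * x (pr n i) + e * s i)"
definition steps :: "nat \<Rightarrow> real \<Rightarrow> (nat \<Rightarrow> real) \<Rightarrow> (nat \<Rightarrow> real) \<Rightarrow> nat \<Rightarrow> real" where
  "steps n e x s = (\<lambda>i. (1/(2*real n)) * x i + (-1/(2*real n)) * x (pr n i)
                       + (1 - 1/real n - e) * s i + (1/real n) * s (pr n i))"

fun trj :: "nat \<Rightarrow> real \<Rightarrow> (nat \<Rightarrow> real) \<Rightarrow> nat \<Rightarrow> (nat \<Rightarrow> real) \<times> (nat \<Rightarrow> real)" where
  "trj n e x0 0 = (x0, \<lambda>_. 0)"
| "trj n e x0 (Suc t) = (stepx n e (fst (trj n e x0 t)) (snd (trj n e x0 t)),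
                         steps n e (fst (trj n e x0 t)) (snd (trj n e x0 t)))"

lemma pow_mat_Suc_left: "A \<in> carrier_mat m m \<Longrightarrow> A ^\<^sub>m Suc k = A * A ^\<^sub>m k"
proof (induct k)
  case 0 then show ?case by simp
next
  case (Suc k)
  have "A ^\<^sub>m Suc (Suc k) = (A * A ^\<^sub>m k) * A" using Suc by simp
  also have "\<dots> = A * (A ^\<^sub>m k * A)" by (rule assoc_mult_mat[of _ m m _ m _ m]) (auto simp: Suc.prems)
  finally show ?case by simp
qed

definition dft :: "nat \<Rightarrow> nat \<Rightarrow> (nat \<Rightarrow> real) \<Rightarrow> complex" where
  "dft n k f = (\<Sum>i<n. of_real (f i) * zeta n ^ (i * k))"

context fixes n :: nat assumes n1: "n > 1" begin

lemma M_tri: "M_mat n e = four_block_mat (tri n (1 - 1/(2*real n)) (1/(2*real n))) (tri n e 0)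
      (tri n (1/(2*real n)) (-1/(2*real n))) (tri n (1 - 1/real n - e) (1/real n))"
  by (simp only: M_mat_def IL_tri[OF n1] Se_tri[OF n1]) (simp only: epsI_tri[OF n1] L_tri[OF n1])

lemma M_step: "M_mat n e *\<^sub>v (vec n x @\<^sub>v vec n s) = vec n (stepx n e x s) @\<^sub>v vec n (steps n e x s)"
proof -
  have "M_mat n e *\<^sub>v (vec n x @\<^sub>v vec n s) =
     (tri n (1 - 1/(2*real n)) (1/(2*real n)) *\<^sub>v vec n x + tri n e 0 *\<^sub>v vec n s) @\<^sub>v
     (tri n (1/(2*real n)) (-1/(2*real n)) *\<^sub>v vec n x + tri n (1 - 1/real n - e) (1/real n) *\<^sub>v vec n s)"
    unfolding M_tri by (rule four_block_mat_mult_vec[of _ n n _ n _ n]) auto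
  also have "tri n (1 - 1/(2*real n)) (1/(2*real n)) *\<^sub>v vec n x + tri n e 0 *\<^sub>v vec n s = vec n (stepx n e x s)"
  proof (rule eq_vecI)
    fix i assume "i < dim_vec (vec n (stepx n e x s))" then have i: "i < n" by simp
    have "(tri n (1 - 1/(2*real n)) (1/(2*real n)) *\<^sub>v vec n x + tri n e 0 *\<^sub>v vec n s) $ i
       = (tri n (1 - 1/(2*real n)) (1/(2*real n)) *\<^sub>v vec n x) $ i + (tri n e 0 *\<^sub>v vec n s) $ i"
      using i by (intro index_add_vec) simp
    also have "\<dots> = (1 - 1/(2*real n)) * vec n x $ i + (1/(2*real n)) * vec n x $ (pr n i) + (e * vec n s $ i + 0 * vec n s $ (pr n i))"
      by (simp only: mv_tri[OF n1 vec_carrier i])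
    finally show "(tri n (1 - 1/(2*real n)) (1/(2*real n)) *\<^sub>v vec n x + tri n e 0 *\<^sub>v vec n s) $ i = vec n (stepx n e x s) $ i"
      using i pr_lt[OF n1 i] by (simp add: stepx_def)
  qed simp
  also have "tri n (1/(2*real n)) (-1/(2*real n)) *\<^sub>v vec n x + tri n (1 - 1/real n - e) (1/real n) *\<^sub>v vec n s
      = vec n (steps n e x s)"
  proof (rule eq_vecI)
    fix i assume "i < dim_vec (vec n (steps n e x s))" then have i: "i < n" by simp
    have "(tri n (1/(2*real n)) (-1/(2*real n)) *\<^sub>v vec n x + tri n (1 - 1/real n - e) (1/real n) *\<^sub>v vec n s) $ i
       = (tri n (1/(2*real n)) (-1/(2*real n)) *\<^sub>v vec n x) $ i + (tri n (1 - 1/real n - e) (1/real n) *\<^sub>v vec n s) $ i"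
      using i by (intro index_add_vec) simp
    also have "\<dots> = (1/(2*real n)) * vec n x $ i + (-1/(2*real n)) * vec n x $ (pr n i) + ((1 - 1/real n - e) * vec n s $ i + (1/real n) * vec n s $ (pr n i))"
      by (simp only: mv_tri[OF n1 vec_carrier i])
    finally show "(tri n (1/(2*real n)) (-1/(2*real n)) *\<^sub>v vec n x + tri n (1 - 1/real n - e) (1/real n) *\<^sub>v vec n s) $ i = vec n (steps n e x s) $ i"
      using i pr_lt[OF n1 i] by (simp add: steps_def)
  qed simp
  finally show ?thesis .
qed

lemma M_carrier: "M_mat n e \<in> carrier_mat (2*n) (2*n)"
proof -
  have "M_mat n e \<in> carrier_mat (n+n) (n+n)" unfolding M_tri by (rule four_block_carrier_mat) auto
  moreover have "n + n = 2*n" by arith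
  ultimately show ?thesis by metis
qed

lemma traj_vec:
  assumes x0: "x0 \<in> carrier_vec n"
  shows "M_mat n e ^\<^sub>m t *\<^sub>v (x0 @\<^sub>v 0\<^sub>v n) =
     vec n (fst (trj n e (\<lambda>i. x0 $ i) t)) @\<^sub>v vec n (snd (trj n e (\<lambda>i. x0 $ i) t))"
proof (induct t)
  case 0
  have x: "x0 = vec n (\<lambda>i. x0 $ i)" using x0 by (intro eq_vecI) auto
  have zz: "0\<^sub>v n = vec n (\<lambda>_. 0::real)" unfolding zero_vec_def ..
  have z: "x0 @\<^sub>v 0\<^sub>v n \<in> carrier_vec (2*n)" using x0 unfolding carrier_vec_def by simp
  have d: "dim_row (M_mat n e) = 2*n" using M_carrier by (rule carrier_matD)
  have "M_mat n e ^\<^sub>m 0 *\<^sub>v (x0 @\<^sub>v 0\<^sub>v n) = 1\<^sub>m (2*n) *\<^sub>v (x0 @\<^sub>v 0\<^sub>v n)"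
    by (simp only: pow_mat.simps(1) d)
  also have "\<dots> = x0 @\<^sub>v 0\<^sub>v n" by (rule one_mult_mat_vec[OF z])
  also have "\<dots> = vec n (\<lambda>i. x0 $ i) @\<^sub>v vec n (\<lambda>_. 0::real)" using x zz by simp
  finally show ?case by (simp only: trj.simps fst_conv snd_conv)
next
  case (Suc t)
  have z: "x0 @\<^sub>v 0\<^sub>v n \<in> carrier_vec (2*n)" using x0 unfolding carrier_vec_def by simp
  have "M_mat n e ^\<^sub>m Suc t *\<^sub>v (x0 @\<^sub>v 0\<^sub>v n) = (M_mat n e * M_mat n e ^\<^sub>m t) *\<^sub>v (x0 @\<^sub>v 0\<^sub>v n)"
    by (simp only: pow_mat_Suc_left[OF M_carrier])
  also have "\<dots> = M_mat n e *\<^sub>v (M_mat n e ^\<^sub>m t *\<^sub>v (x0 @\<^sub>v 0\<^sub>v n))"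
    by (rule assoc_mult_mat_vec[OF M_carrier pow_carrier_mat[OF M_carrier] z])
  also have "\<dots> = M_mat n e *\<^sub>v (vec n (fst (trj n e (\<lambda>i. x0 $ i) t)) @\<^sub>v vec n (snd (trj n e (\<lambda>i. x0 $ i) t)))"
    by (simp only: Suc)
  also have "\<dots> = vec n (fst (trj n e (\<lambda>i. x0 $ i) (Suc t))) @\<^sub>v vec n (snd (trj n e (\<lambda>i. x0 $ i) (Suc t)))"
    by (simp only: M_step trj.simps fst_conv snd_conv)
  finally show ?case .
qed

lemma sc_lt: "j < n \<Longrightarrow> sc n j < n" using n1 by (simp add: sc_def)
lemma pr_sc: assumes j: "j < n" shows "pr n (sc n j) = j" using sc_pr[OF n1 sc_lt[OF j] j] by simp
lemma sc_pr': assumes i: "i < n" shows "sc n (pr n i) = i" using sc_pr[OF n1 i pr_lt[OF n1 i]] by simp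

lemma zeta_sc: "j < n \<Longrightarrow> zeta n ^ (sc n j * k) = zeta n ^ (j * k) * zeta n ^ k"
proof -
  assume j: "j < n"
  have "zeta n ^ (sc n j) = zeta n ^ j * zeta n"
  proof (cases "Suc j = n")
    case True
    then have "sc n j = 0" by (simp add: sc_def)
    then show ?thesis using zeta_n[OF n1] True by (simp add: power_Suc2[symmetric])
  next
    case False
    then have "sc n j = Suc j" using j by (simp add: sc_def)
    then show ?thesis by (simp add: power_Suc2)
  qed
  then show ?thesis by (simp add: power_mult power_mult_distrib)
qed

lemma dft_shift: "(\<Sum>i<n. of_real (f (pr n i)) * zeta n ^ (i * k)) = zeta n ^ k * dft n k f"
proof -
  have "(\<Sum>i<n. of_real (f (pr n i)) * zeta n ^ (i * k)) = (\<Sum>j<n. of_real (f j) * zeta n ^ (sc n j * k))"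
    by (rule sum.reindex_bij_witness[of _ "sc n" "pr n"]) (auto simp: pr_sc sc_pr' sc_lt pr_lt[OF n1])
  also have "\<dots> = (\<Sum>j<n. zeta n ^ k * (of_real (f j) * zeta n ^ (j * k)))"
  proof (rule sum.cong[OF refl])
    fix j assume "j \<in> {..<n}"
    then have "zeta n ^ (sc n j * k) = zeta n ^ (j * k) * zeta n ^ k" by (simp add: zeta_sc)
    then show "of_real (f j) * zeta n ^ (sc n j * k) = zeta n ^ k * (of_real (f j) * zeta n ^ (j * k))"
      by simp
  qed
  also have "\<dots> = zeta n ^ k * dft n k f"
    by (simp add: dft_def sum_distrib_left)
  finally show ?thesis .
qed

lemma dft_lin: "dft n k (\<lambda>i. a * f i + b * f (pr n i) + d * g i + h * g (pr n i))
   = (of_real a + of_real b * zeta n ^ k) * dft n k f + (of_real d + of_real h * zeta n ^ k) * dft n k g"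
proof -
  have "dft n k (\<lambda>i. a * f i + b * f (pr n i) + d * g i + h * g (pr n i))
     = of_real a * dft n k f + of_real b * (\<Sum>i<n. of_real (f (pr n i)) * zeta n ^ (i * k))
       + of_real d * dft n k g + of_real h * (\<Sum>i<n. of_real (g (pr n i)) * zeta n ^ (i * k))"
    by (simp add: dft_def sum.distrib sum_distrib_left algebra_simps)
  then show ?thesis by (simp add: dft_shift algebra_simps)
qed

definition Xm :: "real \<Rightarrow> (nat \<Rightarrow> real) \<Rightarrow> nat \<Rightarrow> nat \<Rightarrow> complex" where
  "Xm e x0 t k = dft n k (fst (trj n e x0 t))"
definition Sm :: "real \<Rightarrow> (nat \<Rightarrow> real) \<Rightarrow> nat \<Rightarrow> nat \<Rightarrow> complex" where
  "Sm e x0 t k = dft n k (snd (trj n e x0 t))"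

lemma Xm_Suc: "Xm e x0 (Suc t) k = alp n k * Xm e x0 t k + of_real e * Sm e x0 t k"
proof -
  have "Xm e x0 (Suc t) k = dft n k (\<lambda>i. (1 - 1/(2*real n)) * fst (trj n e x0 t) i + (1/(2*real n)) * fst (trj n e x0 t) (pr n i)
       + e * snd (trj n e x0 t) i + 0 * snd (trj n e x0 t) (pr n i))"
    by (simp add: Xm_def stepx_def)
  also have "\<dots> = alp n k * Xm e x0 t k + of_real e * Sm e x0 t k"
    unfolding dft_lin by (simp add: alp_def Xm_def Sm_def)
  finally show ?thesis .
qed

lemma bet_alp: "bet n k = 2 * alp n k - 1"
proof -
  have "complex_of_real (1 - 1/real n) = 2 * complex_of_real (1 - 1/(2*real n)) - 1"
    using n1 by (simp add: field_simps)
  moreover have "complex_of_real (1/real n) = 2 * complex_of_real (1/(2*real n))"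
    using n1 by (simp add: field_simps)
  ultimately show ?thesis unfolding alp_def bet_def by (simp add: algebra_simps)
qed

lemma Sm_Suc: "Sm e x0 (Suc t) k = (1 - alp n k) * Xm e x0 t k + (bet n k - of_real e) * Sm e x0 t k"
proof -
  have "Sm e x0 (Suc t) k = dft n k (\<lambda>i. (1/(2*real n)) * fst (trj n e x0 t) i + (-1/(2*real n)) * fst (trj n e x0 t) (pr n i)
       + (1 - 1/real n - e) * snd (trj n e x0 t) i + (1/real n) * snd (trj n e x0 t) (pr n i))"
    by (simp add: Sm_def steps_def)
  also have "\<dots> = (1 - alp n k) * Xm e x0 t k + (bet n k - of_real e) * Sm e x0 t k"
    unfolding dft_lin by (simp add: alp_def bet_def Xm_def Sm_def)
  finally show ?thesis .
qed

end



lemma kappa_lt: "sqrt 2 / (3 + sqrt 5) < 1/3"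
proof -
  have a: "sqrt 2 < 3/2" by (rule real_less_lsqrt) (auto simp: power2_eq_square)
  have b: "2 \<le> sqrt 5" by (rule real_le_rsqrt) auto
  have "3 * sqrt 2 < 3 + sqrt 5" using a b by linarith
  then show ?thesis by (simp add: field_simps add_pos_nonneg)
qed

lemma kappa_pos: "sqrt 2 / (3 + sqrt 5) > 0" by (simp add: add_pos_nonneg)

context fixes n :: nat assumes n1: "n > 1" begin

lemma S_mode0: "Sm n e x0 t 0 = 0"
proof (induct t)
  case 0
  have "snd (trj n e x0 0) = (\<lambda>_. 0)" by simp
  then show ?case unfolding Sm_def[OF n1] dft_def by simp
next
  case (Suc t) then show ?case by (simp add: Sm_Suc[OF n1])
qed

lemma X_mode0: "Xm n e x0 t 0 = Xm n e x0 0 0"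
proof (induct t)
  case 0 then show ?case by simp
next
  case (Suc t) then show ?case by (simp add: Xm_Suc[OF n1] S_mode0)
qed

lemma N_step:
  assumes k: "1 \<le> k" "k < n" and e: "0 \<le> e"
  shows "cmod (Xm n e x0 (Suc t) k) + cmod (Sm n e x0 (Suc t) k - Xm n e x0 (Suc t) k)
     \<le> (r_M0 n + 3 * e) * (cmod (Xm n e x0 t k) + cmod (Sm n e x0 t k - Xm n e x0 t k))"
proof -
  define P where "P = Xm n e x0 t k"
  define Q where "Q = Sm n e x0 t k - Xm n e x0 t k"
  define a where "a = alp n k"
  define b where "b = bet n k"
  have ar: "cmod a \<le> r_M0 n" unfolding a_def using alp_le_r[OF n1 k] .
  have br: "cmod b \<le> r_M0 n" unfolding b_def using bet_le_r[OF n1 k] .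
  have ce: "cmod (complex_of_real e) = e" using e by simp
  have P': "Xm n e x0 (Suc t) k = (a + of_real e) * P + of_real e * Q"
    unfolding Xm_Suc[OF n1] P_def Q_def a_def by (simp add: algebra_simps)
  have Q': "Sm n e x0 (Suc t) k - Xm n e x0 (Suc t) k = (- 2 * of_real e) * P + (b - 2 * of_real e) * Q"
    unfolding Xm_Suc[OF n1] Sm_Suc[OF n1] P_def Q_def b_def bet_alp[OF n1] a_def by (simp add: algebra_simps)
  have i1: "cmod ((a + of_real e) * P + of_real e * Q) \<le> (cmod a + e) * cmod P + e * cmod Q"
  proof -
    have "cmod ((a + of_real e) * P + of_real e * Q) \<le> cmod ((a + of_real e) * P) + cmod (of_real e * Q)"
      by (rule norm_triangle_ineq)
    also have "\<dots> = cmod (a + of_real e) * cmod P + e * cmod Q" using e by (simp add: norm_mult)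
    also have "cmod (a + of_real e) \<le> cmod a + e" using norm_triangle_ineq[of a "of_real e"] ce by simp
    then have "cmod (a + of_real e) * cmod P \<le> (cmod a + e) * cmod P" by (rule mult_right_mono) simp
    finally show ?thesis by simp
  qed
  have i2: "cmod ((- 2 * of_real e) * P + (b - 2 * of_real e) * Q) \<le> 2 * e * cmod P + (cmod b + 2 * e) * cmod Q"
  proof -
    have "cmod ((- 2 * of_real e) * P + (b - 2 * of_real e) * Q) \<le> cmod ((- 2 * of_real e) * P) + cmod ((b - 2 * of_real e) * Q)"
      by (rule norm_triangle_ineq)
    also have "\<dots> = 2 * e * cmod P + cmod (b - 2 * of_real e) * cmod Q" using e by (simp add: norm_mult)
    also have "cmod (b - 2 * of_real e) \<le> cmod b + 2 * e" using norm_triangle_ineq4[of b "2 * of_real e"] e by simp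
    then have "cmod (b - 2 * of_real e) * cmod Q \<le> (cmod b + 2 * e) * cmod Q" by (rule mult_right_mono) simp
    finally show ?thesis by simp
  qed
  have "cmod (Xm n e x0 (Suc t) k) + cmod (Sm n e x0 (Suc t) k - Xm n e x0 (Suc t) k)
      \<le> ((cmod a + e) * cmod P + e * cmod Q) + (2 * e * cmod P + (cmod b + 2 * e) * cmod Q)"
    unfolding Q' unfolding P' by (rule add_mono[OF i1 i2])
  also have "\<dots> = (cmod a + 3 * e) * cmod P + (cmod b + 3 * e) * cmod Q" by (simp add: algebra_simps)
  also have "\<dots> \<le> (r_M0 n + 3 * e) * cmod P + (r_M0 n + 3 * e) * cmod Q"
    using ar br e by (intro add_mono mult_right_mono) auto
  finally show ?thesis unfolding P_def Q_def by (simp add: algebra_simps)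
qed

lemma N_bound:
  assumes k: "1 \<le> k" "k < n" and e: "0 \<le> e" and rho: "0 \<le> r_M0 n + 3 * e"
  shows "cmod (Xm n e x0 t k) + cmod (Sm n e x0 t k - Xm n e x0 t k)
     \<le> (r_M0 n + 3 * e) ^ t * (cmod (Xm n e x0 0 k) + cmod (Sm n e x0 0 k - Xm n e x0 0 k))"
proof (induct t)
  case 0 then show ?case by simp
next
  case (Suc t)
  have "cmod (Xm n e x0 (Suc t) k) + cmod (Sm n e x0 (Suc t) k - Xm n e x0 (Suc t) k)
     \<le> (r_M0 n + 3 * e) * (cmod (Xm n e x0 t k) + cmod (Sm n e x0 t k - Xm n e x0 t k))"
    by (rule N_step[OF k e])
  also have "\<dots> \<le> (r_M0 n + 3 * e) * ((r_M0 n + 3 * e) ^ t * (cmod (Xm n e x0 0 k) + cmod (Sm n e x0 0 k - Xm n e x0 0 k)))"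
    by (rule mult_left_mono[OF Suc rho])
  finally show ?case by (simp add: mult.assoc)
qed

lemma modes_to_0:
  assumes k: "1 \<le> k" "k < n" and e: "0 \<le> e" and rho: "0 \<le> r_M0 n + 3 * e" "r_M0 n + 3 * e < 1"
  shows "(\<lambda>t. Xm n e x0 t k) \<longlonglongrightarrow> 0" "(\<lambda>t. Sm n e x0 t k) \<longlonglongrightarrow> 0"
proof -
  define N0 where "N0 = cmod (Xm n e x0 0 k) + cmod (Sm n e x0 0 k - Xm n e x0 0 k)"
  have N0: "N0 \<ge> 0" unfolding N0_def by simp
  have lim: "(\<lambda>t. (r_M0 n + 3 * e) ^ t * N0) \<longlonglongrightarrow> 0"
    using rho by (intro tendsto_mult_left_zero LIMSEQ_power_zero) simp
  have b: "cmod (Xm n e x0 t k) + cmod (Sm n e x0 t k - Xm n e x0 t k) \<le> (r_M0 n + 3 * e) ^ t * N0" for t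
    unfolding N0_def by (rule N_bound[OF k e rho(1)])
  have nn: "norm ((r_M0 n + 3 * e) ^ t * N0) = (r_M0 n + 3 * e) ^ t * N0" for t
    using rho N0 by simp
  show "(\<lambda>t. Xm n e x0 t k) \<longlonglongrightarrow> 0"
  proof (rule tendsto_0_le[OF lim, of _ 1])
    show "\<forall>\<^sub>F t in sequentially. norm (Xm n e x0 t k) \<le> norm ((r_M0 n + 3 * e) ^ t * N0) * 1"
      unfolding nn using b by (intro always_eventually allI) (smt (verit) norm_ge_zero)
  qed
  show "(\<lambda>t. Sm n e x0 t k) \<longlonglongrightarrow> 0"
  proof (rule tendsto_0_le[OF lim, of _ 1])
    have "norm (Sm n e x0 t k) \<le> (r_M0 n + 3 * e) ^ t * N0" for t
    proof -
      have "norm (Sm n e x0 t k) \<le> cmod (Xm n e x0 t k) + cmod (Sm n e x0 t k - Xm n e x0 t k)"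
        using norm_triangle_ineq[of "Xm n e x0 t k" "Sm n e x0 t k - Xm n e x0 t k"] by simp
      then show ?thesis using b[of t] by linarith
    qed
    then show "\<forall>\<^sub>F t in sequentially. norm (Sm n e x0 t k) \<le> norm ((r_M0 n + 3 * e) ^ t * N0) * 1"
      unfolding nn by (intro always_eventually allI) simp
  qed
qed

lemma orth: assumes i: "i < n" and j: "j < n"
  shows "(\<Sum>k<n. zeta n ^ (i * k) * omg n ^ (j * k)) = (if i = j then of_nat n else 0)"
proof -
  define z where "z = zeta n ^ i * omg n ^ j"
  have zk: "zeta n ^ (i * k) * omg n ^ (j * k) = z ^ k" for k
    unfolding z_def by (simp add: power_mult power_mult_distrib)
  have zn: "z ^ n = 1" unfolding z_def
    by (simp add: power_mult_distrib power_mult[symmetric] mult.commute[of _ n] power_mult zeta_n[OF n1] omg_n[OF n1])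
  have sz: "(\<Sum>k<n. zeta n ^ (i * k) * omg n ^ (j * k)) = (\<Sum>k<n. z ^ k)" by (simp only: zk)
  have zi: "zeta n ^ i * omg n ^ i = 1" by (simp add: power_mult_distrib[symmetric] mult.commute omg_zeta[OF n1])
  show ?thesis
  proof (cases "i = j")
    case True
    then have "z = 1" using zi z_def by simp
    then show ?thesis using True unfolding sz by simp
  next
    case False
    have "z \<noteq> 1"
    proof (cases "i < j")
      case True
      have "omg n ^ j = omg n ^ i * omg n ^ (j - i)" using True by (simp add: power_add[symmetric])
      then have "z = omg n ^ (j - i)" using zi unfolding z_def by (simp add: mult.assoc[symmetric])
      then show ?thesis using omg_pow_ne1[OF n1, of "j - i"] True j by simp
    next
      case f: False
      then have ji: "j < i" using False by simp
      have "zeta n ^ i = zeta n ^ j * zeta n ^ (i - j)" using ji by (simp add: power_add[symmetric])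
      moreover have "zeta n ^ j * omg n ^ j = 1" by (simp add: power_mult_distrib[symmetric] mult.commute omg_zeta[OF n1])
      ultimately have "z = zeta n ^ (i - j)" unfolding z_def by (simp add: algebra_simps)
      then show ?thesis using zeta_pow_ne1[OF n1, of "i - j"] ji i by simp
    qed
    then have "(\<Sum>k<n. z ^ k) = 0" using zn by (simp add: geometric_sum)
    then show ?thesis using False unfolding sz by simp
  qed
qed

lemma inv_dft: assumes j: "j < n"
  shows "complex_of_real (f j) = (1 / of_nat n) * (\<Sum>k<n. dft n k f * omg n ^ (j * k))"
proof -
  have "(\<Sum>k<n. dft n k f * omg n ^ (j * k)) = (\<Sum>k<n. \<Sum>i<n. of_real (f i) * (zeta n ^ (i * k) * omg n ^ (j * k)))"
    by (simp add: dft_def sum_distrib_right mult.assoc)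
  also have "\<dots> = (\<Sum>i<n. of_real (f i) * (\<Sum>k<n. zeta n ^ (i * k) * omg n ^ (j * k)))"
    by (subst sum.swap) (simp add: sum_distrib_left)
  also have "\<dots> = (\<Sum>i<n. of_real (f i) * (if i = j then of_nat n else 0))"
    by (rule sum.cong) (auto simp: orth j)
  also have "\<dots> = of_real (f j) * of_nat n" using j by (simp add: if_distrib cong: if_cong)
  finally show ?thesis using n1 by simp
qed

end



context fixes n :: nat assumes n1: "n > 1" begin

lemma lim_inv:
  fixes g :: "nat \<Rightarrow> nat \<Rightarrow> complex"
  assumes "\<And>k. k < n \<Longrightarrow> (\<lambda>t. g t k) \<longlonglongrightarrow> L k"
  shows "(\<lambda>t. (1 / of_nat n) * (\<Sum>k<n. g t k * omg n ^ (j * k))) \<longlonglongrightarrow> (1 / of_nat n) * (\<Sum>k<n. L k * omg n ^ (j * k))"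
  using assms by (intro tendsto_intros) auto

lemma consensus:
  assumes e: "0 < e" and rho: "r_M0 n + 3 * e < 1"
  shows "average_consensus n e"
  unfolding average_consensus_def Let_def
proof (intro ballI allI impI)
  fix x0 :: "real vec" and i assume x0: "x0 \<in> carrier_vec n" and i: "i < 2 * n"
  define f0 where "f0 = (\<lambda>i. x0 $ i)"
  have r0: "0 \<le> r_M0 n" using r_eq[OF n1] by simp
  have rho0: "0 \<le> r_M0 n + 3 * e" using r0 e by simp
  have entry: "((M_mat n e ^\<^sub>m t) *\<^sub>v (x0 @\<^sub>v 0\<^sub>v n)) $ i
      = (if i < n then fst (trj n e f0 t) i else snd (trj n e f0 t) (i - n))" for t
    unfolding traj_vec[OF n1 x0] f0_def using i by simp
  have X00: "Xm n e f0 0 0 = of_real (\<Sum>i<n. x0 $ i)"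
    unfolding Xm_def[OF n1] dft_def f0_def by simp
  show "(\<lambda>k. ((M_mat n e ^\<^sub>m k) *\<^sub>v (x0 @\<^sub>v 0\<^sub>v n)) $ i) \<longlonglongrightarrow>
        (if i < n then (\<Sum>i<n. x0 $ i) / real n else 0)"
  proof (cases "i < n")
    case True
    let ?L = "\<lambda>k. if k = 0 then Xm n e f0 0 0 else 0"
    have lim: "(\<lambda>t. (1 / of_nat n) * (\<Sum>k<n. Xm n e f0 t k * omg n ^ (i * k))) \<longlonglongrightarrow>
          (1 / of_nat n) * (\<Sum>k<n. ?L k * omg n ^ (i * k))"
    proof (rule lim_inv)
      fix k assume k: "k < n"
      show "(\<lambda>t. Xm n e f0 t k) \<longlonglongrightarrow> ?L k"
      proof (cases "k = 0")
        case True
        have c: "(\<lambda>t. Xm n e f0 t 0) = (\<lambda>t. Xm n e f0 0 0)" by (rule ext, rule X_mode0[OF n1])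
        show ?thesis unfolding True c by simp
      next
        case False then show ?thesis using modes_to_0(1)[OF n1 _ k _ rho0 rho] e by simp
      qed
    qed
    have eqL: "(1 / of_nat n) * (\<Sum>k<n. ?L k * omg n ^ (i * k)) = of_real ((\<Sum>i<n. x0 $ i) / real n)"
    proof -
      have "(\<Sum>k<n. ?L k * omg n ^ (i * k)) = (\<Sum>k<n. if k = 0 then Xm n e f0 0 0 * omg n ^ (i * k) else 0)"
        by (rule sum.cong) auto
      also have "\<dots> = Xm n e f0 0 0" using n1 by simp
      finally show ?thesis using n1 by (simp add: X00)
    qed
    have eqf: "(1 / of_nat n) * (\<Sum>k<n. Xm n e f0 t k * omg n ^ (i * k)) = of_real (fst (trj n e f0 t) i)" for t
      unfolding Xm_def[OF n1] using inv_dft[OF n1 True, of "fst (trj n e f0 t)"] by simp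
    have eqfun: "(\<lambda>t. complex_of_real (fst (trj n e f0 t) i)) = (\<lambda>t. (1 / of_nat n) * (\<Sum>k<n. Xm n e f0 t k * omg n ^ (i * k)))"
      by (rule ext) (rule eqf[symmetric])
    have "(\<lambda>t. complex_of_real (fst (trj n e f0 t) i)) \<longlonglongrightarrow> of_real ((\<Sum>i<n. x0 $ i) / real n)"
      unfolding eqfun eqL[symmetric] by (rule lim)
    then have "(\<lambda>t. fst (trj n e f0 t) i) \<longlonglongrightarrow> (\<Sum>i<n. x0 $ i) / real n"
      by (rule tendsto_of_real_iff[THEN iffD1])
    then show ?thesis unfolding entry using True by simp
  next
    case False
    then have j: "i - n < n" using i by simp
    have "(\<lambda>t. (1 / of_nat n) * (\<Sum>k<n. Sm n e f0 t k * omg n ^ ((i - n) * k))) \<longlonglongrightarrow>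
          (1 / of_nat n) * (\<Sum>k<n. 0 * omg n ^ ((i - n) * k))"
    proof (rule lim_inv)
      fix k assume k: "k < n"
      show "(\<lambda>t. Sm n e f0 t k) \<longlonglongrightarrow> 0"
      proof (cases "k = 0")
        case True then show ?thesis using S_mode0[OF n1] by simp
      next
        case False then show ?thesis using modes_to_0(2)[OF n1 _ k _ rho0 rho] e by simp
      qed
    qed
    moreover have "(1 / of_nat n) * (\<Sum>k<n. Sm n e f0 t k * omg n ^ ((i - n) * k)) = of_real (snd (trj n e f0 t) (i - n))" for t
      unfolding Sm_def[OF n1] using inv_dft[OF n1 j, of "snd (trj n e f0 t)"] by simp
    ultimately have "(\<lambda>t. complex_of_real (snd (trj n e f0 t) (i - n))) \<longlonglongrightarrow> of_real 0"
      by simp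
    then have "(\<lambda>t. snd (trj n e f0 t) (i - n)) \<longlonglongrightarrow> 0"
      by (rule tendsto_of_real_iff[THEN iffD1])
    then show ?thesis unfolding entry using False by simp
  qed
qed

end

theorem proposition5:
  fixes n :: nat
  assumes "n > 1"
  shows "(\<forall>eps::real. 0 < eps \<and> eps < sqrt 2 / (3 + sqrt 5) * (1 - r_M0 n)
                      \<longrightarrow> average_consensus n eps) \<and>
         r_M0 n = sqrt (1 - 1 / real n + 1 / (2 * (real n)\<^sup>2)
                        + (1 / real n) * (1 - 1 / (2 * real n)) * cos (2 * pi / real n))"
proof
  show "\<forall>eps::real. 0 < eps \<and> eps < sqrt 2 / (3 + sqrt 5) * (1 - r_M0 n) \<longrightarrow> average_consensus n eps"
  proof (intro allI impI)
    fix eps :: real assume h: "0 < eps \<and> eps < sqrt 2 / (3 + sqrt 5) * (1 - r_M0 n)"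
    have pos: "0 < 1 - r_M0 n"
    proof (rule ccontr)
      assume "\<not> 0 < 1 - r_M0 n"
      then have "sqrt 2 / (3 + sqrt 5) * (1 - r_M0 n) \<le> 0"
        using kappa_pos by (intro mult_nonneg_nonpos) auto
      then show False using h by simp
    qed
    have "sqrt 2 / (3 + sqrt 5) * (1 - r_M0 n) < 1/3 * (1 - r_M0 n)"
      using kappa_lt pos by (rule mult_strict_right_mono)
    then have e1: "eps < 1/3 * (1 - r_M0 n)" using h by linarith
    then have "r_M0 n + 3 * eps < 1" by (simp add: field_simps)
    then show "average_consensus n eps" using consensus[OF assms] h by blast
  qed
  show "r_M0 n = sqrt (1 - 1 / real n + 1 / (2 * (real n)\<^sup>2)
                        + (1 / real n) * (1 - 1 / (2 * real n)) * cos (2 * pi / real n))"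
    by (rule r_formula[OF assms])
qed



end
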